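(* Suppose Assumption A holds with $\beta,\gamma\in(0,\infty)$, fix $\mu>0$ and $\sigma\in\mathcal X$, and let $\pi^{\mu,\sigma}$ be a perturbed equilibrium. Run MD-SP with full feedback and constant learning rate $$\eta\in\Big(0,\frac{2\mu\gamma\rho^2}{\mu^2\gamma\rho^2(\gamma+2\beta)+8L^2}\Big).$$ Then for every initial profile $\pi^0\in\mathcal X$ and every $t\ge1$, $$D_\psi(\pi^{\mu,\sigma},\pi^t)\le D_\psi(\pi^{\mu,\sigma},\pi^0)\Big(1-\frac{\eta\mu\gamma}{2}\Big)^t.$$
   Context: Game. Let $N\ge1$. For each $i\in[N]$, $\mathcal X_i\subseteq\mathbb R^{d_i}$ is a nonempty compact convex set, and $\mathcal X=\prod_i\mathcal X_i$. Each $v_i:\mathcal X\to\mathbb R$ is differentiable, with block gradient $\nabla_{\pi_i}v_i$. The norm is Euclidean, with $\|\pi\|^2=\sum_i\|\pi_i\|^2$. The game is monotone: $\sum_i\langle\nabla_{\pi_i}v_i(\pi)-\nabla_{\pi_i}v_i(\pi'),\pi_i-\pi_i'\rangle\le0$. The game is $L$-smooth: $\sum_i\|\nabla_{\pi_i}v_i(\pi)-\nabla_{\pi_i}v_i(\pi')\|^2\le L^2\|\pi-\pi'\|^2$. Regularizer. $\psi:\mathcal X_i\to\mathbb R$ is differentiable on $\mathcal X_i$ and $\rho$-strongly convex with respect to $\|\cdot\|$ ($\rho>0$). Bregman divergence: $D_\psi(x,y)=\psi(x)-\psi(y)-\langle\nabla\psi(y),x-y\rangle$, and $D_\psi(\pi,\pi')=\sum_iD_\psi(\pi_i,\pi_i')$.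 Perturbation. $G:\mathcal X_i\times\mathcal X_i\to[0,\infty)$ is differentiable in its first argument, with gradient $\nabla_{\pi_i}G$ in that argument. $G(\cdot,\sigma_i)$ is strictly convex with minimum value $0$ at $\sigma_i$. For $\mu>0$ and $\sigma\in\mathcal X$, $\pi^{\mu,\sigma}$ is a profile with $\pi_i^{\mu,\sigma}\in\arg\max_{\pi_i}\{v_i(\pi_i,\pi^{\mu,\sigma}_{-i})-\mu G(\pi_i,\sigma_i)\}$ for all $i$. Assumption A: for all $\sigma_i,\pi_i,\pi_i'\in\mathcal X_i$, $$\gamma D_\psi(\pi_i',\pi_i)\le G(\pi_i',\sigma_i)-G(\pi_i,\sigma_i)-\langle\nabla_{\pi_i}G(\pi_i,\sigma_i),\pi_i'-\pi_i\rangle\le\beta D_\psi(\pi_i',\pi_i).$$ MD-SP with full feedback: $$\pi_i^{t+1}=\arg\max_{x\in\mathcal X_i}\{\eta_t\langle\nabla_{\pi_i}v_i(\pi^t)-\mu\nabla_{\pi_i}G(\pi_i^t,\sigma_i),x\rangle-D_\psi(x,\pi_i^t)\}.$$ *)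

theory Defs
  imports "HOL-Analysis.Analysis"
begin

definition strict_convex_on :: "'a::real_vector set \<Rightarrow> ('a \<Rightarrow> real) \<Rightarrow> bool" where
  "strict_convex_on S f \<longleftrightarrow> convex S \<and>
     (\<forall>x\<in>S. \<forall>y\<in>S. x \<noteq> y \<longrightarrow> (\<forall>t::real. 0 < t \<and> t < 1 \<longrightarrow>
        f ((1 - t) *\<^sub>R x + t *\<^sub>R y) < (1 - t) * f x + t * f y))"

definition strongly_convex_on :: "real \<Rightarrow> 'a::real_normed_vector set \<Rightarrow> ('a \<Rightarrow> real) \<Rightarrow> bool" where
  "strongly_convex_on \<rho> S f \<longleftrightarrow> convex S \<and>
     (\<forall>x\<in>S. \<forall>y\<in>S. \<forall>t::real. 0 \<le> t \<and> t \<le> 1 \<longrightarrow>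
        f ((1 - t) *\<^sub>R x + t *\<^sub>R y) \<le> (1 - t) * f x + t * f y - \<rho> / 2 * t * (1 - t) * (norm (x - y))\<^sup>2)"

definition bregman :: "('a::real_inner \<Rightarrow> real) \<Rightarrow> ('a \<Rightarrow> 'a) \<Rightarrow> 'a \<Rightarrow> 'a \<Rightarrow> real" where
  "bregman \<psi> g\<psi> x y = \<psi> x - \<psi> y - inner (g\<psi> y) (x - y)"

definition bregman_prof :: "('i::finite \<Rightarrow> 'a::real_inner \<Rightarrow> real) \<Rightarrow> ('i \<Rightarrow> 'a \<Rightarrow> 'a) \<Rightarrow> ('i \<Rightarrow> 'a) \<Rightarrow> ('i \<Rightarrow> 'a) \<Rightarrow> real" where
  "bregman_prof \<psi> g\<psi> p q = (\<Sum>i\<in>UNIV. bregman (\<psi> i) (g\<psi> i) (p i) (q i))"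

end

theory Submission
  imports Defs
begin

lemma dir_deriv_le:
  fixes f :: "'a::real_normed_vector \<Rightarrow> real"
  assumes D: "(f has_derivative f') (at x within S)" and cS: "convex S"
    and xS: "x \<in> S" and zS: "z \<in> S"
    and H: "\<And>s. 0 < s \<Longrightarrow> s < 1 \<Longrightarrow> f (x + s *\<^sub>R (z - x)) - f x \<le> s * B + s^2 * C"
  shows "f' (z - x) \<le> B"
proof -
  define p where "p = (\<lambda>s::real. x + s *\<^sub>R (z - x))"
  have pd: "(p has_derivative (\<lambda>s. s *\<^sub>R (z - x))) (at 0 within {0..1})"
    unfolding p_def by (auto intro!: derivative_eq_intros)
  have sub: "p ` {0..1} \<subseteq> S"
  proof
    fix y assume "y \<in> p ` {0..1}"
    then obtain s where s: "s \<in> {0..1}" "y = p s" by auto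
    have "y = (1 - s) *\<^sub>R x + s *\<^sub>R z" using s by (simp add: p_def algebra_simps)
    then show "y \<in> S" using s cS xS zS by (auto simp: convex_alt)
  qed
  have p0: "p 0 = x" by (simp add: p_def)
  have D2: "(f has_derivative f') (at (p 0) within p ` {0..1})"
    using has_derivative_subset[OF D sub] p0 by simp
  have comp: "((f \<circ> p) has_derivative (f' \<circ> (\<lambda>s. s *\<^sub>R (z - x)))) (at 0 within {0..1})"
    by (rule diff_chain_within[OF pd D2])
  have lin: "linear f'" using D has_derivative_linear by blast
  have eqf: "f' \<circ> (\<lambda>s. s *\<^sub>R (z - x)) = (\<lambda>s. f' (z - x) * s)"
    using linear_scale[OF lin] by (auto simp: fun_eq_iff)
  have "((f \<circ> p) has_field_derivative f' (z - x)) (at 0 within {0..1})"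
    using comp unfolding has_field_derivative_def eqf by (simp add: mult.commute)
  then have T: "((\<lambda>s. ((f \<circ> p) s - (f \<circ> p) 0) / (s - 0)) \<longlongrightarrow> f' (z - x)) (at_right 0)"
    unfolding has_field_derivative_iff using at_within_Icc_at_right[of "0::real" 1] by simp
  have T2: "((\<lambda>s. B + s * C) \<longlongrightarrow> B + 0 * C) (at_right (0::real))"
    by (intro tendsto_intros)
  have ev: "\<forall>\<^sub>F s in at_right (0::real). ((f \<circ> p) s - (f \<circ> p) 0) / (s - 0) \<le> B + s * C"
  proof -
    have "\<forall>\<^sub>F s in at_right (0::real). 0 < s \<and> s < 1"
      using eventually_at_right_real[of 0 1] by simp
    then show ?thesis
    proof (rule eventually_mono)
      fix s :: real assume "0 < s \<and> s < 1"
      then have s: "0 < s" "s < 1" by auto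
      have "f (p s) - f x \<le> s * (B + s * C)" using H[OF s] by (simp add: p_def power2_eq_square algebra_simps)
      then show "((f \<circ> p) s - (f \<circ> p) 0) / (s - 0) \<le> B + s * C"
        using s p0 by (simp add: divide_le_eq mult.commute)
    qed
  qed
  have "f' (z - x) \<le> B + 0 * C"
    by (rule tendsto_le[OF _ T2 T ev]) simp
  then show ?thesis by simp
qed

lemma dir_deriv_ge:
  fixes f :: "'a::real_normed_vector \<Rightarrow> real"
  assumes D: "(f has_derivative f') (at x within S)" and cS: "convex S"
    and xS: "x \<in> S" and zS: "z \<in> S"
    and H: "\<And>s. 0 < s \<Longrightarrow> s < 1 \<Longrightarrow> f (x + s *\<^sub>R (z - x)) - f x \<ge> s * A - s^2 * C"
  shows "f' (z - x) \<ge> A"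
proof -
  have D': "((\<lambda>y. - f y) has_derivative (\<lambda>h. - f' h)) (at x within S)"
    using has_derivative_minus[OF D] .
  have "- f' (z - x) \<le> - A"
    by (rule dir_deriv_le[OF D' cS xS zS, of "-A" C]) (use H in force)
  then show ?thesis by simp
qed

lemma seg_in:
  assumes "convex S" "x \<in> S" "z \<in> S" "0 \<le> s" "s \<le> 1"
  shows "x + s *\<^sub>R (z - x) \<in> S"
proof -
  have "x + s *\<^sub>R (z - x) = (1 - s) *\<^sub>R x + s *\<^sub>R z" by (simp add: algebra_simps)
  then show ?thesis using assms by (auto simp: convex_alt)
qed

lemma bregman_lower:
  fixes \<psi> :: "'a::real_inner \<Rightarrow> real"
  assumes sc: "strongly_convex_on \<rho> S \<psi>"
    and D: "(\<psi> has_derivative (\<lambda>h. inner (g y) h)) (at y within S)"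
    and xS: "x \<in> S" and yS: "y \<in> S"
  shows "bregman \<psi> g x y \<ge> \<rho> / 2 * (norm (x - y))\<^sup>2"
proof -
  have cS: "convex S" using sc unfolding strongly_convex_on_def by blast
  have "inner (g y) (x - y) \<le> \<psi> x - \<psi> y - \<rho> / 2 * (norm (x - y))\<^sup>2"
  proof (rule dir_deriv_le[OF D cS yS xS, of _ "\<rho> / 2 * (norm (x - y))\<^sup>2"])
    fix s :: real assume s: "0 < s" "s < 1"
    have "\<psi> ((1 - s) *\<^sub>R y + s *\<^sub>R x) \<le> (1 - s) * \<psi> y + s * \<psi> x - \<rho> / 2 * s * (1 - s) * (norm (y - x))\<^sup>2"
      using sc xS yS s unfolding strongly_convex_on_def by auto
    moreover have "(1 - s) *\<^sub>R y + s *\<^sub>R x = y + s *\<^sub>R (x - y)" by (simp add: algebra_simps)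
    moreover have "norm (y - x) = norm (x - y)" by (rule norm_minus_commute)
    ultimately have E: "\<psi> (y + s *\<^sub>R (x - y)) \<le> (1 - s) * \<psi> y + s * \<psi> x - \<rho> / 2 * s * (1 - s) * (norm (x - y))\<^sup>2"
      by simp
    have "s * (\<psi> x - \<psi> y - \<rho> / 2 * (norm (x - y))\<^sup>2) + s\<^sup>2 * (\<rho> / 2 * (norm (x - y))\<^sup>2)
        = (1 - s) * \<psi> y + s * \<psi> x - \<rho> / 2 * s * (1 - s) * (norm (x - y))\<^sup>2 - \<psi> y"
      by (simp add: power2_eq_square field_simps)
    with E show "\<psi> (y + s *\<^sub>R (x - y)) - \<psi> y \<le> s * (\<psi> x - \<psi> y - \<rho> / 2 * (norm (x - y))\<^sup>2) + s\<^sup>2 * (\<rho> / 2 * (norm (x - y))\<^sup>2)"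
      by linarith
  qed
  then show ?thesis unfolding bregman_def by simp
qed

lemma md_step:
  fixes \<psi> :: "'a::real_inner \<Rightarrow> real"
  assumes cS: "convex S"
    and D: "(\<psi> has_derivative (\<lambda>h. inner (g xp) h)) (at xp within S)"
    and opt: "\<And>x. x \<in> S \<Longrightarrow> \<eta> * inner w x - bregman \<psi> g x y \<le> \<eta> * inner w xp - bregman \<psi> g xp y"
    and aS: "a \<in> S" and xpS: "xp \<in> S"
  shows "\<eta> * inner w (a - xp) \<le> bregman \<psi> g a y - bregman \<psi> g a xp - bregman \<psi> g xp y"
proof -
  have "inner (g xp) (a - xp) \<ge> \<eta> * inner w (a - xp) + inner (g y) (a - xp)"
  proof (rule dir_deriv_ge[OF D cS xpS aS, of _ 0])
    fix s :: real assume s: "0 < s" "s < 1"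
    have "xp + s *\<^sub>R (a - xp) \<in> S" using seg_in[OF cS xpS aS] s by auto
    from opt[OF this]
    show "s * (\<eta> * inner w (a - xp) + inner (g y) (a - xp)) - s\<^sup>2 * 0 \<le> \<psi> (xp + s *\<^sub>R (a - xp)) - \<psi> xp"
      unfolding bregman_def by (simp add: inner_diff_right inner_add_right algebra_simps)
  qed
  then show ?thesis unfolding bregman_def by (simp add: inner_diff_right inner_diff_left algebra_simps)
qed

lemma gen_eq: "((a::real) * s + b * r) * S = a * (s * S) + b * (r * S)"
  by (simp add: algebra_simps)

lemma inner_young:
  fixes u w :: "'a::real_inner"
  assumes c: "c > 0"
  shows "inner u w \<le> (norm u)\<^sup>2 / (2 * c) + c / 2 * (norm w)\<^sup>2"
proof -
  have "0 \<le> (norm (u - c *\<^sub>R w))\<^sup>2" by simp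
  also have "\<dots> = (norm u)\<^sup>2 - 2 * c * inner u w + c\<^sup>2 * (norm w)\<^sup>2"
    by (simp only: power2_norm_eq_inner) (simp add: inner_diff_left inner_diff_right inner_commute[of w u] power2_eq_square algebra_simps)
  finally have "2 * c * inner u w \<le> (norm u)\<^sup>2 + c\<^sup>2 * (norm w)\<^sup>2" by simp
  then have "inner u w \<le> ((norm u)\<^sup>2 + c\<^sup>2 * (norm w)\<^sup>2) / (2 * c)"
    using c by (simp add: le_divide_eq mult.commute)
  also have "\<dots> = (norm u)\<^sup>2 / (2 * c) + c / 2 * (norm w)\<^sup>2"
    using c by (simp add: field_simps power2_eq_square)
  finally show ?thesis .
qed

theorem theorem4:
  fixes X :: "'i::finite \<Rightarrow> 'a::euclidean_space set"
    and v :: "'i \<Rightarrow> ('i \<Rightarrow> 'a) \<Rightarrow> real"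
    and gv :: "'i \<Rightarrow> ('i \<Rightarrow> 'a) \<Rightarrow> 'a"
    and \<psi> :: "'i \<Rightarrow> 'a \<Rightarrow> real" and g\<psi> :: "'i \<Rightarrow> 'a \<Rightarrow> 'a"
    and G :: "'i \<Rightarrow> 'a \<Rightarrow> 'a \<Rightarrow> real" and gG :: "'i \<Rightarrow> 'a \<Rightarrow> 'a \<Rightarrow> 'a"
    and L \<rho> \<beta> \<gamma> \<mu> \<eta> :: real
    and \<sigma> \<pi>\<mu> :: "'i \<Rightarrow> 'a"
    and \<pi> :: "nat \<Rightarrow> 'i \<Rightarrow> 'a"
  assumes X_nonempty: "\<And>i. X i \<noteq> {}"
    and X_compact: "\<And>i. compact (X i)"
    and X_convex: "\<And>i. convex (X i)"
    \<comment> \<open>block gradients of the payoffs\<close>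
    and v_grad: "\<And>p i. (\<forall>j. p j \<in> X j) \<Longrightarrow>
        ((\<lambda>x. v i (p(i := x))) has_derivative (\<lambda>h. inner (gv i p) h)) (at (p i) within X i)"
    \<comment> \<open>monotone game\<close>
    and monotone: "\<And>p q. (\<forall>j. p j \<in> X j) \<Longrightarrow> (\<forall>j. q j \<in> X j) \<Longrightarrow>
        (\<Sum>i\<in>UNIV. inner (gv i p - gv i q) (p i - q i)) \<le> 0"
    \<comment> \<open>L-smooth game\<close>
    and smooth: "\<And>p q. (\<forall>j. p j \<in> X j) \<Longrightarrow> (\<forall>j. q j \<in> X j) \<Longrightarrow>
        (\<Sum>i\<in>UNIV. (norm (gv i p - gv i q))\<^sup>2) \<le> L\<^sup>2 * (\<Sum>i\<in>UNIV. (norm (p i - q i))\<^sup>2)"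
    \<comment> \<open>regularizer\<close>
    and \<rho>_pos: "\<rho> > 0"
    and \<psi>_grad: "\<And>i x. x \<in> X i \<Longrightarrow> (\<psi> i has_derivative (\<lambda>h. inner (g\<psi> i x) h)) (at x within X i)"
    and \<psi>_strong: "\<And>i. strongly_convex_on \<rho> (X i) (\<psi> i)"
    \<comment> \<open>perturbation function\<close>
    and G_nonneg: "\<And>i x s. x \<in> X i \<Longrightarrow> s \<in> X i \<Longrightarrow> G i x s \<ge> 0"
    and G_grad: "\<And>i x s. x \<in> X i \<Longrightarrow> s \<in> X i \<Longrightarrow>
        ((\<lambda>y. G i y s) has_derivative (\<lambda>h. inner (gG i x s) h)) (at x within X i)"
    and G_strict: "\<And>i s. s \<in> X i \<Longrightarrow> strict_convex_on (X i) (\<lambda>y. G i y s)"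
    and G_zero: "\<And>i s. s \<in> X i \<Longrightarrow> G i s s = 0"
    \<comment> \<open>Assumption A\<close>
    and \<beta>_pos: "\<beta> > 0" and \<gamma>_pos: "\<gamma> > 0"
    and assmA: "\<And>i s x x'. s \<in> X i \<Longrightarrow> x \<in> X i \<Longrightarrow> x' \<in> X i \<Longrightarrow>
        \<gamma> * bregman (\<psi> i) (g\<psi> i) x' x \<le> G i x' s - G i x s - inner (gG i x s) (x' - x)
      \<and> G i x' s - G i x s - inner (gG i x s) (x' - x) \<le> \<beta> * bregman (\<psi> i) (g\<psi> i) x' x"
    \<comment> \<open>perturbed equilibrium\<close>
    and \<mu>_pos: "\<mu> > 0"
    and \<sigma>_in: "\<And>i. \<sigma> i \<in> X i"
    and eq_in: "\<And>i. \<pi>\<mu> i \<in> X i"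
    and eq_max: "\<And>i x. x \<in> X i \<Longrightarrow>
        v i (\<pi>\<mu>(i := x)) - \<mu> * G i x (\<sigma> i) \<le> v i \<pi>\<mu> - \<mu> * G i (\<pi>\<mu> i) (\<sigma> i)"
    \<comment> \<open>learning rate\<close>
    and \<eta>_pos: "\<eta> > 0"
    and \<eta>_bound: "\<eta> < 2 * \<mu> * \<gamma> * \<rho>\<^sup>2 / (\<mu>\<^sup>2 * \<gamma> * \<rho>\<^sup>2 * (\<gamma> + 2 * \<beta>) + 8 * L\<^sup>2)"
    \<comment> \<open>MD-SP with full feedback\<close>
    and init_in: "\<And>i. \<pi> 0 i \<in> X i"
    and step_in: "\<And>t i. \<pi> (Suc t) i \<in> X i"
    and step_max: "\<And>t i x. x \<in> X i \<Longrightarrow>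
        \<eta> * inner (gv i (\<pi> t) - \<mu> *\<^sub>R gG i (\<pi> t i) (\<sigma> i)) x - bregman (\<psi> i) (g\<psi> i) x (\<pi> t i)
      \<le> \<eta> * inner (gv i (\<pi> t) - \<mu> *\<^sub>R gG i (\<pi> t i) (\<sigma> i)) (\<pi> (Suc t) i)
          - bregman (\<psi> i) (g\<psi> i) (\<pi> (Suc t) i) (\<pi> t i)"
  shows "\<forall>t\<ge>1. bregman_prof \<psi> g\<psi> \<pi>\<mu> (\<pi> t)
            \<le> bregman_prof \<psi> g\<psi> \<pi>\<mu> (\<pi> 0) * (1 - \<eta> * \<mu> * \<gamma> / 2) ^ t"
proof -
  have piX: "\<And>t i. \<pi> t i \<in> X i"
  proof -
    fix t i show "\<pi> t i \<in> X i" using init_in step_in by (cases t) auto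
  qed
  have lowD: "\<And>i x y. x \<in> X i \<Longrightarrow> y \<in> X i \<Longrightarrow> bregman (\<psi> i) (g\<psi> i) x y \<ge> \<rho> / 2 * (norm (x - y))\<^sup>2"
    by (rule bregman_lower[OF \<psi>_strong \<psi>_grad])
  have foc: "\<And>i z. z \<in> X i \<Longrightarrow> inner (gv i \<pi>\<mu> - \<mu> *\<^sub>R gG i (\<pi>\<mu> i) (\<sigma> i)) (z - \<pi>\<mu> i) \<le> 0"
  proof -
    fix i z assume zX: "z \<in> X i"
    have pX: "\<forall>j. \<pi>\<mu> j \<in> X j" using eq_in by blast
    have D: "((\<lambda>x. v i (\<pi>\<mu>(i := x)) - \<mu> * G i x (\<sigma> i)) has_derivative
       (\<lambda>h. inner (gv i \<pi>\<mu>) h - \<mu> * inner (gG i (\<pi>\<mu> i) (\<sigma> i)) h)) (at (\<pi>\<mu> i) within X i)"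
      by (intro has_derivative_diff has_derivative_mult_right v_grad[OF pX] G_grad eq_in \<sigma>_in)
    have "inner (gv i \<pi>\<mu>) (z - \<pi>\<mu> i) - \<mu> * inner (gG i (\<pi>\<mu> i) (\<sigma> i)) (z - \<pi>\<mu> i) \<le> 0"
    proof (rule dir_deriv_le[OF D X_convex eq_in zX, of 0 0])
      fix s :: real assume s: "0 < s" "s < 1"
      have "\<pi>\<mu> i + s *\<^sub>R (z - \<pi>\<mu> i) \<in> X i" using seg_in[OF X_convex eq_in zX] s by auto
      from eq_max[OF this] show "v i (\<pi>\<mu>(i := \<pi>\<mu> i + s *\<^sub>R (z - \<pi>\<mu> i))) - \<mu> * G i (\<pi>\<mu> i + s *\<^sub>R (z - \<pi>\<mu> i)) (\<sigma> i) -
          (v i (\<pi>\<mu>(i := \<pi>\<mu> i)) - \<mu> * G i (\<pi>\<mu> i) (\<sigma> i)) \<le> s * 0 + s\<^sup>2 * 0"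
        by simp
    qed
    then show "inner (gv i \<pi>\<mu> - \<mu> *\<^sub>R gG i (\<pi>\<mu> i) (\<sigma> i)) (z - \<pi>\<mu> i) \<le> 0"
      by (simp add: inner_diff_left)
  qed
  have mdi: "\<And>t i. \<eta> * inner (gv i (\<pi> t) - \<mu> *\<^sub>R gG i (\<pi> t i) (\<sigma> i)) (\<pi>\<mu> i - \<pi> (Suc t) i)
      \<le> bregman (\<psi> i) (g\<psi> i) (\<pi>\<mu> i) (\<pi> t i) - bregman (\<psi> i) (g\<psi> i) (\<pi>\<mu> i) (\<pi> (Suc t) i)
         - bregman (\<psi> i) (g\<psi> i) (\<pi> (Suc t) i) (\<pi> t i)"
    by (rule md_step[OF X_convex \<psi>_grad[OF step_in] step_max eq_in step_in])
  define c where "c = \<mu> * \<gamma> * \<rho> / 2"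
  have c_pos: "c > 0" using \<mu>_pos \<gamma>_pos \<rho>_pos by (simp add: c_def)
  let ?D = "\<lambda>i. bregman (\<psi> i) (g\<psi> i)"
  have G3: "\<And>t i. - \<mu> * inner (gG i (\<pi> t i) (\<sigma> i) - gG i (\<pi>\<mu> i) (\<sigma> i)) (\<pi> (Suc t) i - \<pi>\<mu> i)
     \<le> \<mu> * \<beta> * ?D i (\<pi> (Suc t) i) (\<pi> t i) - \<mu> * \<gamma> * ?D i (\<pi> (Suc t) i) (\<pi>\<mu> i) - \<mu> * \<gamma> * ?D i (\<pi>\<mu> i) (\<pi> t i)"
  proof -
    fix t i
    let ?B = "\<lambda>x' x. G i x' (\<sigma> i) - G i x (\<sigma> i) - inner (gG i x (\<sigma> i)) (x' - x)"
    have id: "inner (gG i (\<pi>\<mu> i) (\<sigma> i) - gG i (\<pi> t i) (\<sigma> i)) (\<pi> (Suc t) i - \<pi>\<mu> i)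
       = ?B (\<pi> (Suc t) i) (\<pi> t i) - ?B (\<pi> (Suc t) i) (\<pi>\<mu> i) - ?B (\<pi>\<mu> i) (\<pi> t i)"
      by (simp add: inner_diff_left inner_diff_right algebra_simps)
    have a1: "?B (\<pi> (Suc t) i) (\<pi> t i) \<le> \<beta> * ?D i (\<pi> (Suc t) i) (\<pi> t i)"
      using assmA[OF \<sigma>_in piX piX] by blast
    have a2: "\<gamma> * ?D i (\<pi> (Suc t) i) (\<pi>\<mu> i) \<le> ?B (\<pi> (Suc t) i) (\<pi>\<mu> i)"
      using assmA[OF \<sigma>_in eq_in piX] by blast
    have a3: "\<gamma> * ?D i (\<pi>\<mu> i) (\<pi> t i) \<le> ?B (\<pi>\<mu> i) (\<pi> t i)"
      using assmA[OF \<sigma>_in piX eq_in] by blast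
    have "inner (gG i (\<pi>\<mu> i) (\<sigma> i) - gG i (\<pi> t i) (\<sigma> i)) (\<pi> (Suc t) i - \<pi>\<mu> i)
       \<le> \<beta> * ?D i (\<pi> (Suc t) i) (\<pi> t i) - \<gamma> * ?D i (\<pi> (Suc t) i) (\<pi>\<mu> i) - \<gamma> * ?D i (\<pi>\<mu> i) (\<pi> t i)"
      using id a1 a2 a3 by linarith
    note H = mult_left_mono[OF this less_imp_le[OF \<mu>_pos]]
    show "- \<mu> * inner (gG i (\<pi> t i) (\<sigma> i) - gG i (\<pi>\<mu> i) (\<sigma> i)) (\<pi> (Suc t) i - \<pi>\<mu> i)
     \<le> \<mu> * \<beta> * ?D i (\<pi> (Suc t) i) (\<pi> t i) - \<mu> * \<gamma> * ?D i (\<pi> (Suc t) i) (\<pi>\<mu> i) - \<mu> * \<gamma> * ?D i (\<pi>\<mu> i) (\<pi> t i)"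
    proof -
      have "- \<mu> * inner (gG i (\<pi> t i) (\<sigma> i) - gG i (\<pi>\<mu> i) (\<sigma> i)) (\<pi> (Suc t) i - \<pi>\<mu> i)
          = \<mu> * inner (gG i (\<pi>\<mu> i) (\<sigma> i) - gG i (\<pi> t i) (\<sigma> i)) (\<pi> (Suc t) i - \<pi>\<mu> i)"
        by (simp add: inner_diff_left algebra_simps)
      moreover have "\<mu> * (\<beta> * ?D i (\<pi> (Suc t) i) (\<pi> t i) - \<gamma> * ?D i (\<pi> (Suc t) i) (\<pi>\<mu> i) - \<gamma> * ?D i (\<pi>\<mu> i) (\<pi> t i))
          = \<mu> * \<beta> * ?D i (\<pi> (Suc t) i) (\<pi> t i) - \<mu> * \<gamma> * ?D i (\<pi> (Suc t) i) (\<pi>\<mu> i) - \<mu> * \<gamma> * ?D i (\<pi>\<mu> i) (\<pi> t i)"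
        by (simp add: algebra_simps)
      ultimately show ?thesis using H by linarith
    qed
  qed
  have key: "\<And>t i. ?D i (\<pi>\<mu> i) (\<pi> (Suc t) i) \<le> ?D i (\<pi>\<mu> i) (\<pi> t i) - ?D i (\<pi> (Suc t) i) (\<pi> t i)
     + \<eta> * inner (gv i (\<pi> (Suc t)) - gv i \<pi>\<mu>) (\<pi> (Suc t) i - \<pi>\<mu> i)
     + \<eta> / (2 * c) * (norm (gv i (\<pi> t) - gv i (\<pi> (Suc t))))\<^sup>2
     + \<eta> * c / 2 * (norm (\<pi> (Suc t) i - \<pi>\<mu> i))\<^sup>2
     + \<eta> * \<mu> * \<beta> * ?D i (\<pi> (Suc t) i) (\<pi> t i) - \<eta> * \<mu> * \<gamma> * ?D i (\<pi> (Suc t) i) (\<pi>\<mu> i)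
     - \<eta> * \<mu> * \<gamma> * ?D i (\<pi>\<mu> i) (\<pi> t i)"
  proof -
    fix t i
    define e where "e = \<pi> (Suc t) i - \<pi>\<mu> i"
    define w where "w = gv i (\<pi> t) - \<mu> *\<^sub>R gG i (\<pi> t i) (\<sigma> i)"
    define u where "u = gv i (\<pi> t) - gv i (\<pi> (Suc t))"
    define M where "M = inner (gv i (\<pi> (Suc t)) - gv i \<pi>\<mu>) e"
    define F where "F = inner (gv i \<pi>\<mu> - \<mu> *\<^sub>R gG i (\<pi>\<mu> i) (\<sigma> i)) e"
    define Q where "Q = - \<mu> * inner (gG i (\<pi> t i) (\<sigma> i) - gG i (\<pi>\<mu> i) (\<sigma> i)) e"
    have decomp: "inner w e = inner u e + M + F + Q"
      unfolding w_def u_def M_def F_def Q_def by (simp add: inner_diff_left algebra_simps)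
    have f: "F \<le> 0" unfolding F_def e_def by (rule foc[OF piX])
    have y: "inner u e \<le> (norm u)\<^sup>2 / (2 * c) + c / 2 * (norm e)\<^sup>2" by (rule inner_young[OF c_pos])
    have g: "Q \<le> \<mu> * \<beta> * ?D i (\<pi> (Suc t) i) (\<pi> t i) - \<mu> * \<gamma> * ?D i (\<pi> (Suc t) i) (\<pi>\<mu> i) - \<mu> * \<gamma> * ?D i (\<pi>\<mu> i) (\<pi> t i)"
      unfolding Q_def e_def by (rule G3)
    define Y where "Y = M + (norm u)\<^sup>2 / (2 * c) + c / 2 * (norm e)\<^sup>2 + (\<mu> * \<beta> * ?D i (\<pi> (Suc t) i) (\<pi> t i) - \<mu> * \<gamma> * ?D i (\<pi> (Suc t) i) (\<pi>\<mu> i) - \<mu> * \<gamma> * ?D i (\<pi>\<mu> i) (\<pi> t i))"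
    have "inner w e \<le> Y" unfolding Y_def using decomp f y g by linarith
    then have "\<eta> * inner w e \<le> \<eta> * Y" using \<eta>_pos by (simp add: mult_left_mono)
    moreover have "\<eta> * inner w (\<pi>\<mu> i - \<pi> (Suc t) i) = - (\<eta> * inner w e)"
      unfolding e_def by (simp add: inner_diff_right algebra_simps)
    moreover have "\<eta> * inner w (\<pi>\<mu> i - \<pi> (Suc t) i) \<le> ?D i (\<pi>\<mu> i) (\<pi> t i) - ?D i (\<pi>\<mu> i) (\<pi> (Suc t) i) - ?D i (\<pi> (Suc t) i) (\<pi> t i)"
      unfolding w_def by (rule mdi)
    moreover have "\<eta> * Y = \<eta> * M + \<eta> / (2 * c) * (norm u)\<^sup>2 + \<eta> * c / 2 * (norm e)\<^sup>2
       + \<eta> * \<mu> * \<beta> * ?D i (\<pi> (Suc t) i) (\<pi> t i) - \<eta> * \<mu> * \<gamma> * ?D i (\<pi> (Suc t) i) (\<pi>\<mu> i)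
       - \<eta> * \<mu> * \<gamma> * ?D i (\<pi>\<mu> i) (\<pi> t i)"
      unfolding Y_def by (simp add: algebra_simps)
    ultimately show "?D i (\<pi>\<mu> i) (\<pi> (Suc t) i) \<le> ?D i (\<pi>\<mu> i) (\<pi> t i) - ?D i (\<pi> (Suc t) i) (\<pi> t i)
     + \<eta> * inner (gv i (\<pi> (Suc t)) - gv i \<pi>\<mu>) (\<pi> (Suc t) i - \<pi>\<mu> i)
     + \<eta> / (2 * c) * (norm (gv i (\<pi> t) - gv i (\<pi> (Suc t))))\<^sup>2
     + \<eta> * c / 2 * (norm (\<pi> (Suc t) i - \<pi>\<mu> i))\<^sup>2
     + \<eta> * \<mu> * \<beta> * ?D i (\<pi> (Suc t) i) (\<pi> t i) - \<eta> * \<mu> * \<gamma> * ?D i (\<pi> (Suc t) i) (\<pi>\<mu> i)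
     - \<eta> * \<mu> * \<gamma> * ?D i (\<pi>\<mu> i) (\<pi> t i)"
      unfolding M_def u_def e_def by linarith
  qed
  have PX: "\<And>t. \<forall>j. \<pi> t j \<in> X j" using piX by blast
  have PM: "\<forall>j. \<pi>\<mu> j \<in> X j" using eq_in by blast
  have nonneg: "\<And>t. bregman_prof \<psi> g\<psi> \<pi>\<mu> (\<pi> t) \<ge> 0"
  proof -
    fix t
    have "\<And>i. ?D i (\<pi>\<mu> i) (\<pi> t i) \<ge> 0"
      using lowD[OF eq_in piX] \<rho>_pos by (meson order_trans zero_le_divide_iff zero_le_power2 mult_nonneg_nonneg less_imp_le zero_le_numeral)
    then show "bregman_prof \<psi> g\<psi> \<pi>\<mu> (\<pi> t) \<ge> 0" unfolding bregman_prof_def by (simp add: sum_nonneg)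
  qed
  have step: "\<And>t. bregman_prof \<psi> g\<psi> \<pi>\<mu> (\<pi> (Suc t)) \<le> (1 - \<eta> * \<mu> * \<gamma>) * bregman_prof \<psi> g\<psi> \<pi>\<mu> (\<pi> t)"
  proof -
    fix t
    define Dn where "Dn = (\<Sum>i\<in>UNIV. ?D i (\<pi>\<mu> i) (\<pi> (Suc t) i))"
    define Do where "Do = (\<Sum>i\<in>UNIV. ?D i (\<pi>\<mu> i) (\<pi> t i))"
    define A where "A = (\<Sum>i\<in>UNIV. ?D i (\<pi> (Suc t) i) (\<pi> t i))"
    define Ee where "Ee = (\<Sum>i\<in>UNIV. ?D i (\<pi> (Suc t) i) (\<pi>\<mu> i))"
    define M where "M = (\<Sum>i\<in>UNIV. inner (gv i (\<pi> (Suc t)) - gv i \<pi>\<mu>) (\<pi> (Suc t) i - \<pi>\<mu> i))"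
    define W where "W = (\<Sum>i\<in>UNIV. (norm (gv i (\<pi> t) - gv i (\<pi> (Suc t))))\<^sup>2)"
    define Se where "Se = (\<Sum>i\<in>UNIV. (norm (\<pi> (Suc t) i - \<pi>\<mu> i))\<^sup>2)"
    define SD where "SD = (\<Sum>i\<in>UNIV. (norm (\<pi> t i - \<pi> (Suc t) i))\<^sup>2)"
    have "Dn \<le> (\<Sum>i\<in>UNIV. ?D i (\<pi>\<mu> i) (\<pi> t i) - ?D i (\<pi> (Suc t) i) (\<pi> t i)
     + \<eta> * inner (gv i (\<pi> (Suc t)) - gv i \<pi>\<mu>) (\<pi> (Suc t) i - \<pi>\<mu> i)
     + \<eta> / (2 * c) * (norm (gv i (\<pi> t) - gv i (\<pi> (Suc t))))\<^sup>2
     + \<eta> * c / 2 * (norm (\<pi> (Suc t) i - \<pi>\<mu> i))\<^sup>2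
     + \<eta> * \<mu> * \<beta> * ?D i (\<pi> (Suc t) i) (\<pi> t i) - \<eta> * \<mu> * \<gamma> * ?D i (\<pi> (Suc t) i) (\<pi>\<mu> i)
     - \<eta> * \<mu> * \<gamma> * ?D i (\<pi>\<mu> i) (\<pi> t i))"
      unfolding Dn_def by (rule sum_mono) (rule key)
    also have "\<dots> = Do - A + \<eta> * M + \<eta> / (2 * c) * W + \<eta> * c / 2 * Se + \<eta> * \<mu> * \<beta> * A - \<eta> * \<mu> * \<gamma> * Ee - \<eta> * \<mu> * \<gamma> * Do"
      unfolding Do_def A_def M_def W_def Se_def Ee_def
      by (simp add: sum.distrib sum_subtractf sum_distrib_left)
    finally have S: "Dn \<le> Do - A + \<eta> * M + \<eta> / (2 * c) * W + \<eta> * c / 2 * Se + \<eta> * \<mu> * \<beta> * A - \<eta> * \<mu> * \<gamma> * Ee - \<eta> * \<mu> * \<gamma> * Do" .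
    have hM: "M \<le> 0" unfolding M_def by (rule monotone[OF PX PM])
    have hW: "W \<le> L\<^sup>2 * SD" unfolding W_def SD_def by (rule smooth[OF PX PX])
    have hA: "A \<ge> \<rho> / 2 * SD"
    proof -
      have "\<rho> / 2 * SD = (\<Sum>i\<in>UNIV. \<rho> / 2 * (norm (\<pi> (Suc t) i - \<pi> t i))\<^sup>2)"
        unfolding SD_def by (simp add: sum_distrib_left norm_minus_commute)
      also have "\<dots> \<le> A" unfolding A_def by (rule sum_mono) (rule lowD[OF piX piX])
      finally show ?thesis .
    qed
    have hE: "Ee \<ge> \<rho> / 2 * Se"
    proof -
      have "\<rho> / 2 * Se = (\<Sum>i\<in>UNIV. \<rho> / 2 * (norm (\<pi> (Suc t) i - \<pi>\<mu> i))\<^sup>2)"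
        unfolding Se_def by (simp add: sum_distrib_left)
      also have "\<dots> \<le> Ee" unfolding Ee_def by (rule sum_mono) (rule lowD[OF piX eq_in])
      finally show ?thesis .
    qed
    have Se0: "Se \<ge> 0" unfolding Se_def by (simp add: sum_nonneg)
    have SD0: "SD \<ge> 0" unfolding SD_def by (simp add: sum_nonneg)
    have mg: "\<mu> * \<gamma> * \<rho> > 0" using \<mu>_pos \<gamma>_pos \<rho>_pos by simp
    have den_pos: "\<mu>\<^sup>2 * \<gamma> * \<rho>\<^sup>2 * (\<gamma> + 2 * \<beta>) + 8 * L\<^sup>2 > 0"
      using \<mu>_pos \<gamma>_pos \<rho>_pos \<beta>_pos by (intro add_pos_nonneg) auto
    have eb: "\<eta> * (\<mu>\<^sup>2 * \<gamma> * \<rho>\<^sup>2 * (\<gamma> + 2 * \<beta>) + 8 * L\<^sup>2) < 2 * \<mu> * \<gamma> * \<rho>\<^sup>2"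
      using \<eta>_bound den_pos by (simp add: less_divide_eq)
    have nn1: "\<eta> * (\<mu>\<^sup>2 * \<gamma> * \<rho>\<^sup>2 * \<gamma>) \<ge> 0" using \<eta>_pos \<gamma>_pos by simp
    have nn2: "\<eta> * L\<^sup>2 \<ge> 0" using \<eta>_pos by simp
    have K: "2 * (\<eta> * L\<^sup>2) + (\<eta> * \<mu> * \<beta>) * (\<mu> * \<gamma> * \<rho>\<^sup>2) \<le> \<mu> * \<gamma> * \<rho>\<^sup>2"
    proof -
      have "\<eta> * (\<mu>\<^sup>2 * \<gamma> * \<rho>\<^sup>2 * (\<gamma> + 2 * \<beta>) + 8 * L\<^sup>2)
          = \<eta> * (\<mu>\<^sup>2 * \<gamma> * \<rho>\<^sup>2 * \<gamma>) + 2 * ((\<eta> * \<mu> * \<beta>) * (\<mu> * \<gamma> * \<rho>\<^sup>2)) + 8 * (\<eta> * L\<^sup>2)"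
        by algebra
      then show ?thesis using eb nn1 nn2 by linarith
    qed
    have "(\<eta> * \<mu> * \<beta>) * (\<mu> * \<gamma> * \<rho>\<^sup>2) \<le> 1 * (\<mu> * \<gamma> * \<rho>\<^sup>2)" using K nn2 by simp
    then have emb: "\<eta> * \<mu> * \<beta> \<le> 1"
      using \<mu>_pos \<gamma>_pos \<rho>_pos by (subst (asm) mult_le_cancel_right) auto
    have T1: "\<eta> / (2 * c) * W \<le> \<eta> / (2 * c) * (L\<^sup>2 * SD)"
      using hW \<eta>_pos c_pos by (intro mult_left_mono) auto
    have T2: "(\<eta> * \<mu> * \<beta> - 1) * A \<le> (\<eta> * \<mu> * \<beta> - 1) * (\<rho> / 2 * SD)"
      using hA emb by (intro mult_left_mono_neg) auto
    have T3a: "\<eta> * c / 2 * Se \<le> (\<eta> * \<mu> * \<gamma>) * (\<rho> / 2 * Se)"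
    proof -
      have "\<eta> * c / 2 * Se = (\<eta> * \<mu> * \<gamma>) * (\<rho> / 4 * Se)" by (simp add: c_def)
      also have "\<dots> \<le> (\<eta> * \<mu> * \<gamma>) * (\<rho> / 2 * Se)"
        using Se0 \<rho>_pos \<eta>_pos \<mu>_pos \<gamma>_pos by (intro mult_left_mono) auto
      finally show ?thesis .
    qed
    have T3b: "(\<eta> * \<mu> * \<gamma>) * (\<rho> / 2 * Se) \<le> (\<eta> * \<mu> * \<gamma>) * Ee"
      using hE \<eta>_pos \<mu>_pos \<gamma>_pos by (intro mult_left_mono) auto
    have T4: "\<eta> * M \<le> 0" using hM \<eta>_pos by (simp add: mult_nonneg_nonpos)
    have coef: "\<eta> / (2 * c) * L\<^sup>2 + (\<eta> * \<mu> * \<beta> - 1) * (\<rho> / 2) \<le> 0"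
    proof -
      have "(\<eta> / (2 * c) * L\<^sup>2 + (\<eta> * \<mu> * \<beta> - 1) * (\<rho> / 2)) * (\<mu> * \<gamma> * \<rho>)
          = (2 * (\<eta> * L\<^sup>2) + (\<eta> * \<mu> * \<beta>) * (\<mu> * \<gamma> * \<rho>\<^sup>2) - \<mu> * \<gamma> * \<rho>\<^sup>2) / 2"
        using mg \<mu>_pos \<gamma>_pos \<rho>_pos by (simp add: c_def field_simps power2_eq_square)
      also have "\<dots> \<le> 0" using K by simp
      finally have "(\<eta> / (2 * c) * L\<^sup>2 + (\<eta> * \<mu> * \<beta> - 1) * (\<rho> / 2)) * (\<mu> * \<gamma> * \<rho>) \<le> 0 * (\<mu> * \<gamma> * \<rho>)" by simp
      then show ?thesis using mg by (subst (asm) mult_le_cancel_right) auto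
    qed
    have T5: "(\<eta> / (2 * c) * L\<^sup>2 + (\<eta> * \<mu> * \<beta> - 1) * (\<rho> / 2)) * SD \<le> 0"
      using coef SD0 by (simp add: mult_nonpos_nonneg)
    have "Dn \<le> (1 - \<eta> * \<mu> * \<gamma>) * Do + (\<eta> / (2 * c) * L\<^sup>2 + (\<eta> * \<mu> * \<beta> - 1) * (\<rho> / 2)) * SD"
    proof -
      have e1: "(\<eta> * \<mu> * \<beta> - 1) * A = \<eta> * \<mu> * \<beta> * A - A" by (simp add: algebra_simps)
      have e2: "(\<eta> / (2 * c) * L\<^sup>2 + (\<eta> * \<mu> * \<beta> - 1) * (\<rho> / 2)) * SD
         = \<eta> / (2 * c) * (L\<^sup>2 * SD) + (\<eta> * \<mu> * \<beta> - 1) * (\<rho> / 2 * SD)" using gen_eq[of "\<eta> / (2 * c)" "L\<^sup>2" "\<eta> * \<mu> * \<beta> - 1" "\<rho> / 2" SD] by simp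
      have e3: "(1 - \<eta> * \<mu> * \<gamma>) * Do = Do - \<eta> * \<mu> * \<gamma> * Do" by (simp add: algebra_simps)
      show ?thesis using S T1 T2 T3a T3b T4 e1 e2 e3 by linarith
    qed
    with T5 have "Dn \<le> (1 - \<eta> * \<mu> * \<gamma>) * Do" by linarith
    then show "bregman_prof \<psi> g\<psi> \<pi>\<mu> (\<pi> (Suc t)) \<le> (1 - \<eta> * \<mu> * \<gamma>) * bregman_prof \<psi> g\<psi> \<pi>\<mu> (\<pi> t)"
      unfolding Dn_def Do_def bregman_prof_def .
  qed
  have q0: "1 - \<eta> * \<mu> * \<gamma> / 2 \<ge> 0"
  proof -
    have den_pos: "\<mu>\<^sup>2 * \<gamma> * \<rho>\<^sup>2 * (\<gamma> + 2 * \<beta>) + 8 * L\<^sup>2 > 0"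
      using \<mu>_pos \<gamma>_pos \<rho>_pos \<beta>_pos by (intro add_pos_nonneg) auto
    have eb: "\<eta> * (\<mu>\<^sup>2 * \<gamma> * \<rho>\<^sup>2 * (\<gamma> + 2 * \<beta>) + 8 * L\<^sup>2) < 2 * \<mu> * \<gamma> * \<rho>\<^sup>2"
      using \<eta>_bound den_pos by (simp add: less_divide_eq)
    have "\<eta> * (\<mu>\<^sup>2 * \<gamma> * \<rho>\<^sup>2 * (\<gamma> + 2 * \<beta>) + 8 * L\<^sup>2)
        = (\<eta> * \<mu> * \<gamma>) * (\<mu> * \<gamma> * \<rho>\<^sup>2) + 2 * (\<eta> * (\<mu>\<^sup>2 * \<gamma> * \<rho>\<^sup>2 * \<beta>)) + 8 * (\<eta> * L\<^sup>2)"
      by (simp add: power2_eq_square algebra_simps)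
    moreover have "\<eta> * (\<mu>\<^sup>2 * \<gamma> * \<rho>\<^sup>2 * \<beta>) \<ge> 0" "\<eta> * L\<^sup>2 \<ge> 0"
      using \<eta>_pos \<gamma>_pos \<beta>_pos by auto
    ultimately have "(\<eta> * \<mu> * \<gamma>) * (\<mu> * \<gamma> * \<rho>\<^sup>2) < 2 * (\<mu> * \<gamma> * \<rho>\<^sup>2)" using eb by linarith
    then have "\<eta> * \<mu> * \<gamma> < 2"
      using \<mu>_pos \<gamma>_pos \<rho>_pos by (subst (asm) mult_less_cancel_right) auto
    then show ?thesis by simp
  qed
  have all: "\<And>t. bregman_prof \<psi> g\<psi> \<pi>\<mu> (\<pi> t) \<le> bregman_prof \<psi> g\<psi> \<pi>\<mu> (\<pi> 0) * (1 - \<eta> * \<mu> * \<gamma> / 2) ^ t"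
  proof -
    fix t show "bregman_prof \<psi> g\<psi> \<pi>\<mu> (\<pi> t) \<le> bregman_prof \<psi> g\<psi> \<pi>\<mu> (\<pi> 0) * (1 - \<eta> * \<mu> * \<gamma> / 2) ^ t"
    proof (induction t)
      case 0 then show ?case by simp
    next
      case (Suc t)
      have a: "bregman_prof \<psi> g\<psi> \<pi>\<mu> (\<pi> (Suc t)) \<le> (1 - \<eta> * \<mu> * \<gamma>) * bregman_prof \<psi> g\<psi> \<pi>\<mu> (\<pi> t)"
        by (rule step)
      have b: "(1 - \<eta> * \<mu> * \<gamma>) * bregman_prof \<psi> g\<psi> \<pi>\<mu> (\<pi> t) \<le> (1 - \<eta> * \<mu> * \<gamma> / 2) * bregman_prof \<psi> g\<psi> \<pi>\<mu> (\<pi> t)"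
        using nonneg[of t] \<eta>_pos \<mu>_pos \<gamma>_pos by (intro mult_right_mono) auto
      have c: "(1 - \<eta> * \<mu> * \<gamma> / 2) * bregman_prof \<psi> g\<psi> \<pi>\<mu> (\<pi> t)
          \<le> (1 - \<eta> * \<mu> * \<gamma> / 2) * (bregman_prof \<psi> g\<psi> \<pi>\<mu> (\<pi> 0) * (1 - \<eta> * \<mu> * \<gamma> / 2) ^ t)"
        by (rule mult_left_mono[OF Suc.IH q0])
      have d: "(1 - \<eta> * \<mu> * \<gamma> / 2) * (bregman_prof \<psi> g\<psi> \<pi>\<mu> (\<pi> 0) * (1 - \<eta> * \<mu> * \<gamma> / 2) ^ t)
          = bregman_prof \<psi> g\<psi> \<pi>\<mu> (\<pi> 0) * (1 - \<eta> * \<mu> * \<gamma> / 2) ^ Suc t"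
        by (simp only: power_Suc mult.left_commute)
      show ?case using order_trans[OF order_trans[OF a b] c] unfolding d .
    qed
  qed
  then show ?thesis by simp
qed


end
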